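(* Suppose Assumptions (A1) and (A2) below hold and $\omega_0\sim\pi_\eta$. Then for all sufficiently small $\gamma>0$ there is a constant $C$ such that $$\mathbb{E}\exp\{\gamma|\omega_k|^2\}\le C\quad\text{for every }k\ge0.$$
   Context: Let $\psi:\mathbb{R}^d\times\mathbb{R}^r\to\mathbb{R}$ be differentiable in its first argument, $\zeta\sim\nu$ on $\mathbb{R}^r$, $P(\omega)=\mathbb{E}\psi(\omega,\zeta)$, $\nabla P=\mathbb{E}\nabla\psi(\cdot,\zeta)$. The SGLD chain with step size $\eta>0$ (small) and inverse temperature parameter $\delta>0$ is $\omega_k=\omega_{k-1}-\eta\nabla\psi(\omega_{k-1},\zeta_k)+\sqrt{\eta\delta}\,\xi_k$, with $(\xi_k)$ i.i.d. $N(0,I_d)$, $(\zeta_k)$ i.i.d. with law $\nu$, all independent of each other and of $\omega_0$; $\pi_\eta$ is its invariant probability measure. Assumption (A1): there exist $L,K_1>0$, $K_2\ge0$ with $|\nabla\psi(x,z)-\nabla\psi(y,z)|\le L|x-y|$ and $\langle x-y,-\nabla\psi(x,z)+\nabla\psi(y,z)\rangle\le-K_1|x-y|^2+K_2$ for all $x,y,z$. Assumption (A2): for every $x$, $\nabla\psi(x,\zeta)$ is sub-Gaussian, i.e. $\mathbb{E}\exp\{K_\zeta|\nabla\psi(x,\zeta)|^2\}\le C$ for some $K_\zeta,C>0$. *)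

theory Defs
  imports "HOL-Probability.Probability"
begin

definition std_gauss :: "'a::euclidean_space measure" where
  "std_gauss = density lborel
     (\<lambda>x. ennreal ((2 * pi) powr (- real DIM('a) / 2) * exp (- (norm x)\<^sup>2 / 2)))"

definition sgld_kernel ::
  "('a::euclidean_space \<Rightarrow> 'c::euclidean_space \<Rightarrow> 'a) \<Rightarrow> 'c measure \<Rightarrow> real \<Rightarrow> real \<Rightarrow> 'a \<Rightarrow> 'a measure" where
  "sgld_kernel g \<nu> \<eta> \<delta> x =
     distr (\<nu> \<Otimes>\<^sub>M std_gauss) borel
       (\<lambda>(z, e). x - \<eta> *\<^sub>R g x z + sqrt (\<eta> * \<delta>) *\<^sub>R e)"

text \<open>Law of omega_k when omega_0 has law mu0.\<close>
fun sgld_law ::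
  "('a::euclidean_space \<Rightarrow> 'c::euclidean_space \<Rightarrow> 'a) \<Rightarrow> 'c measure \<Rightarrow> real \<Rightarrow> real \<Rightarrow> 'a measure \<Rightarrow> nat \<Rightarrow> 'a measure" where
  "sgld_law g \<nu> \<eta> \<delta> \<mu>0 0 = \<mu>0"
| "sgld_law g \<nu> \<eta> \<delta> \<mu>0 (Suc k) = sgld_law g \<nu> \<eta> \<delta> \<mu>0 k \<bind> sgld_kernel g \<nu> \<eta> \<delta>"

end

theory Submission
  imports Defs "HOL-Probability.Distributions"
begin


lemma gauss1:
  fixes a :: real assumes a: "a > 0"
  shows "(\<integral>\<^sup>+t. ennreal (exp (- a * t\<^sup>2)) \<partial>lborel) = ennreal (sqrt (pi / a))"
proof -
  define \<sigma> where "\<sigma> = sqrt (1 / (2 * a))"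
  have s2: "\<sigma>\<^sup>2 = 1 / (2*a)" using a by (simp add: \<sigma>_def)
  have nd: "normal_density 0 \<sigma> t = sqrt (a / pi) * exp (- a * t\<^sup>2)" for t
    unfolding normal_density_def s2 using a
    by (simp add: field_simps real_sqrt_divide)
  have "(\<integral>\<^sup>+t. ennreal (normal_density 0 \<sigma> t) \<partial>lborel) = 1"
    using a by (subst nn_integral_eq_integral) (auto simp: \<sigma>_def)
  hence "(\<integral>\<^sup>+t. ennreal (sqrt (a / pi)) * ennreal (exp (- a * t\<^sup>2)) \<partial>lborel) = 1"
    using a by (simp add: nd ennreal_mult')
  hence "ennreal (sqrt (a / pi)) * (\<integral>\<^sup>+t. ennreal (exp (- a * t\<^sup>2)) \<partial>lborel) = 1"
    by (subst (asm) nn_integral_cmult) auto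
  hence "ennreal (sqrt (pi / a)) * (ennreal (sqrt (a / pi)) * (\<integral>\<^sup>+t. ennreal (exp (- a * t\<^sup>2)) \<partial>lborel)) = ennreal (sqrt (pi / a))"
    by simp
  moreover have "ennreal (sqrt (pi / a)) * ennreal (sqrt (a / pi)) = 1"
    using a by (simp add: ennreal_mult[symmetric] real_sqrt_mult[symmetric])
  ultimately show ?thesis by (simp add: mult.assoc[symmetric])
qed

lemma gaussN:
  fixes a :: real assumes a: "a > 0"
  shows "(\<integral>\<^sup>+x. ennreal (exp (- a * (norm x)\<^sup>2)) \<partial>(lborel::'a::euclidean_space measure)) = ennreal (sqrt (pi / a) ^ DIM('a))"
proof -
  have "ennreal (exp (- a * (norm x)\<^sup>2)) = (\<Prod>b\<in>Basis. ennreal (exp (- a * (x \<bullet> b)\<^sup>2)))" for x :: 'a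
  proof -
    have "(norm x)\<^sup>2 = (\<Sum>b\<in>Basis. (x \<bullet> b)\<^sup>2)"
      unfolding power2_norm_eq_inner by (subst euclidean_inner) (simp add: power2_eq_square)
    hence "exp (- a * (norm x)\<^sup>2) = (\<Prod>b\<in>Basis. exp (- a * (x \<bullet> b)\<^sup>2))"
      by (simp add: sum_distrib_left exp_sum)
    thus ?thesis by (simp add: prod_ennreal)
  qed
  hence "(\<integral>\<^sup>+x. ennreal (exp (- a * (norm x)\<^sup>2)) \<partial>(lborel::'a measure))
     = (\<integral>\<^sup>+x. (\<Prod>b\<in>Basis. ennreal (exp (- a * (x \<bullet> b)\<^sup>2))) \<partial>(lborel::'a measure))" by simp
  also have "\<dots> = (\<Prod>b\<in>(Basis::'a set). (\<integral>\<^sup>+t. ennreal (exp (- a * t\<^sup>2)) \<partial>lborel))"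
    by (subst nn_integral_lborel_prod) auto
  also have "\<dots> = ennreal (sqrt (pi / a) ^ DIM('a))"
    using a gauss1[OF a] by (simp add: ennreal_power)
  finally show ?thesis .
qed

lemma std_gauss_moment:
  fixes c :: real assumes c: "c < 1/2"
  shows "(\<integral>\<^sup>+x. ennreal (exp (c * (norm x)\<^sup>2)) \<partial>(std_gauss::'a::euclidean_space measure))
     = ennreal ((2 * pi) powr (- real DIM('a) / 2) * sqrt (pi / (1/2 - c)) ^ DIM('a))"
proof -
  let ?k = "(2 * pi) powr (- real DIM('a) / 2)"
  have "(\<integral>\<^sup>+x. ennreal (exp (c * (norm x)\<^sup>2)) \<partial>(std_gauss::'a measure))
     = (\<integral>\<^sup>+x. ennreal (?k * exp (- (norm x)\<^sup>2 / 2)) * ennreal (exp (c * (norm x)\<^sup>2)) \<partial>(lborel::'a measure))"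
    unfolding std_gauss_def by (subst nn_integral_density) auto
  also have "\<dots> = (\<integral>\<^sup>+x. ennreal ?k * ennreal (exp (- (1/2 - c) * (norm x)\<^sup>2)) \<partial>(lborel::'a measure))"
    by (intro nn_integral_cong) (simp add: ennreal_mult'[symmetric] mult.assoc exp_add[symmetric] algebra_simps)
  also have "\<dots> = ennreal ?k * (\<integral>\<^sup>+x. ennreal (exp (- (1/2 - c) * (norm x)\<^sup>2)) \<partial>(lborel::'a measure))"
    by (rule nn_integral_cmult) simp
  also have "\<dots> = ennreal ?k * ennreal (sqrt (pi / (1/2 - c)) ^ DIM('a))"
    using c by (subst gaussN) auto
  also have "\<dots> = ennreal (?k * sqrt (pi / (1/2 - c)) ^ DIM('a))"
    by (simp add: ennreal_mult')
  finally show ?thesis .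
qed

lemma std_gauss_prob: "prob_space (std_gauss::'a::euclidean_space measure)"
proof
  have "emeasure (std_gauss::'a measure) (space std_gauss) = (\<integral>\<^sup>+x. ennreal (exp (0 * (norm x)\<^sup>2)) \<partial>(std_gauss::'a measure))"
    by simp
  also have "\<dots> = ennreal ((2 * pi) powr (- real DIM('a) / 2) * sqrt (2*pi) ^ DIM('a))"
    by (subst std_gauss_moment) (auto simp: mult.commute)
  also have "sqrt (2*pi) ^ DIM('a) = (2 * pi) powr (real DIM('a) / 2)"
    by (simp add: powr_half_sqrt[symmetric] powr_realpow[symmetric] powr_powr)
  also have "(2 * pi) powr (- real DIM('a) / 2) * (2 * pi) powr (real DIM('a) / 2) = 1"
    by (simp add: powr_add[symmetric])
  finally show "emeasure (std_gauss::'a measure) (space std_gauss) = 1" by simp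
qed

lemma kernel_props:
  fixes g :: "'a::euclidean_space \<Rightarrow> 'c::euclidean_space \<Rightarrow> 'a"
  assumes g_meas: "(\<lambda>p. g (fst p) (snd p)) \<in> borel_measurable borel"
    and nu: "prob_space \<nu>" "sets \<nu> = sets borel"
  shows "sgld_kernel g \<nu> \<eta> \<delta> \<in> borel \<rightarrow>\<^sub>M subprob_algebra borel"
    and "prob_space (sgld_kernel g \<nu> \<eta> \<delta> x)"
    and "sets (sgld_kernel g \<nu> \<eta> \<delta> x) = sets borel"
proof -
  have gm[measurable]: "(\<lambda>(x,z). g x z) \<in> borel_measurable (borel \<Otimes>\<^sub>M borel)"
    using g_meas by (simp add: borel_prod case_prod_beta')
  have P: "prob_space (\<nu> \<Otimes>\<^sub>M (std_gauss::'a measure))"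
    by (intro prob_space_pair nu std_gauss_prob)
  have S: "sets (\<nu> \<Otimes>\<^sub>M (std_gauss::'a measure)) = sets (borel \<Otimes>\<^sub>M borel)"
    using nu(2) by (intro sets_pair_measure_cong) (auto simp: std_gauss_def)
  have f: "(\<lambda>(x, ze). (case ze of (z, e) \<Rightarrow> x - \<eta> *\<^sub>R g x z + sqrt (\<eta> * \<delta>) *\<^sub>R e))
      \<in> borel \<Otimes>\<^sub>M (\<nu> \<Otimes>\<^sub>M (std_gauss::'a measure)) \<rightarrow>\<^sub>M borel"
  proof -
    have "(\<lambda>(x, ze). (case ze of (z, e) \<Rightarrow> x - \<eta> *\<^sub>R g x z + sqrt (\<eta> * \<delta>) *\<^sub>R e))
      \<in> (borel::'a measure) \<Otimes>\<^sub>M ((borel::'c measure) \<Otimes>\<^sub>M (borel::'a measure)) \<rightarrow>\<^sub>M borel"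
      by measurable
    then show ?thesis
      by (subst measurable_cong_sets[OF sets_pair_measure_cong[OF refl S] refl])
  qed
  show "sgld_kernel g \<nu> \<eta> \<delta> \<in> borel \<rightarrow>\<^sub>M subprob_algebra borel"
    unfolding sgld_kernel_def
    by (rule measurable_distr2[OF f]) (rule measurable_const[OF prob_space.M_in_subprob[OF P]])
  show "prob_space (sgld_kernel g \<nu> \<eta> \<delta> x)"
    unfolding sgld_kernel_def
    by (rule prob_space.prob_space_distr[OF P]) (use f in \<open>measurable\<close>)
  show "sets (sgld_kernel g \<nu> \<eta> \<delta> x) = sets borel"
    by (simp add: sgld_kernel_def)
qed



lemma stationary_bound:
  fixes V :: "'a::euclidean_space \<Rightarrow> real" and P :: "'a \<Rightarrow> 'a measure"
  assumes pi: "prob_space \<pi>" "sets \<pi> = sets (borel::'a measure)"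
    and P: "P \<in> borel \<rightarrow>\<^sub>M subprob_algebra borel" "\<And>x. prob_space (P x)"
    and inv: "\<pi> \<bind> P = \<pi>"
    and V[measurable]: "V \<in> borel_measurable borel" and Vnn: "\<And>x. V x \<ge> 0"
    and B: "B \<ge> 0"
    and drift: "\<And>x. (\<integral>\<^sup>+y. ennreal (V y) \<partial>P x) \<le> ennreal (V x / 2 + B)"
  shows "(\<integral>\<^sup>+x. ennreal (V x) \<partial>\<pi>) \<le> ennreal (2 * B)"
proof -
  have mpi: "f \<in> borel_measurable \<pi>" if "f \<in> borel_measurable borel" for f :: "'a \<Rightarrow> ennreal"
    using that by (subst measurable_cong_sets[OF pi(2) refl])
  have Pm: "P \<in> \<pi> \<rightarrow>\<^sub>M subprob_algebra borel"
    by (subst measurable_cong_sets[OF pi(2) refl]) (rule P(1))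
  have trunc: "(\<integral>\<^sup>+x. ennreal (if V x \<le> real n then V x else 0) \<partial>\<pi>) \<le> ennreal (2 * B)" for n :: nat
  proof -
    define M where "M = real n"
    have M0: "M \<ge> 0" by (simp add: M_def)
    define h where "h x = min (V x) M" for x
    define f where "f x = min (V x / 2 + B) M" for x
    define w where "w x = (if V x \<le> M then V x else 0)" for x
    have [measurable]: "h \<in> borel_measurable borel" "f \<in> borel_measurable borel" "w \<in> borel_measurable borel"
      unfolding h_def[abs_def] f_def[abs_def] w_def[abs_def] by measurable
    have pm1: "(\<lambda>x. ennreal (h x)) \<in> borel_measurable \<pi>" by (rule mpi) measurable
    have pm2: "(\<lambda>x. ennreal (f x)) \<in> borel_measurable \<pi>" by (rule mpi) measurable
    have pm3: "(\<lambda>x. ennreal (w x)) \<in> borel_measurable \<pi>" by (rule mpi) measurable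
    have pm4: "(\<lambda>x. ennreal (w x / 2)) \<in> borel_measurable \<pi>" by (rule mpi) measurable
    note pm = pm1 pm2 pm3 pm4
    have "(\<integral>\<^sup>+x. ennreal (h x) \<partial>\<pi>) = (\<integral>\<^sup>+x. ennreal (h x) \<partial>(\<pi> \<bind> P))"
      using inv by simp
    also have "\<dots> = (\<integral>\<^sup>+x. (\<integral>\<^sup>+y. ennreal (h y) \<partial>P x) \<partial>\<pi>)"
      by (rule nn_integral_bind[OF _ Pm]) measurable
    also have "\<dots> \<le> (\<integral>\<^sup>+x. ennreal (f x) \<partial>\<pi>)"
    proof (rule nn_integral_mono)
      fix x
      interpret Px: prob_space "P x" by (rule P(2))
      have s: "sets (P x) = sets borel"
        using measurable_space[OF P(1), of x] by (simp add: space_subprob_algebra)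
      have hm: "(\<lambda>y. ennreal (h y)) \<in> borel_measurable (P x)"
        by (subst measurable_cong_sets[OF s refl]) simp
      have "(\<integral>\<^sup>+y. ennreal (h y) \<partial>P x) \<le> (\<integral>\<^sup>+y. ennreal (V y) \<partial>P x)"
        by (rule nn_integral_mono) (auto simp: h_def intro!: ennreal_leI)
      also have "\<dots> \<le> ennreal (V x / 2 + B)" by (rule drift)
      finally have 1: "(\<integral>\<^sup>+y. ennreal (h y) \<partial>P x) \<le> ennreal (V x / 2 + B)" .
      have "(\<integral>\<^sup>+y. ennreal (h y) \<partial>P x) \<le> (\<integral>\<^sup>+y. ennreal M \<partial>P x)"
        by (rule nn_integral_mono) (auto simp: h_def intro!: ennreal_leI)
      also have "\<dots> = ennreal M" by (simp add: Px.emeasure_space_1)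
      finally have 2: "(\<integral>\<^sup>+y. ennreal (h y) \<partial>P x) \<le> ennreal M" .
      have "(\<integral>\<^sup>+y. ennreal (h y) \<partial>P x) \<le> min (ennreal (V x / 2 + B)) (ennreal M)"
        using 1 2 by simp
      also have "\<dots> = ennreal (f x)"
        unfolding f_def using Vnn[of x] B M0 by (subst min_ennreal) auto
      finally show "(\<integral>\<^sup>+y. ennreal (h y) \<partial>P x) \<le> ennreal (f x)" .
    qed
    finally have hf: "(\<integral>\<^sup>+x. ennreal (h x) \<partial>\<pi>) \<le> (\<integral>\<^sup>+x. ennreal (f x) \<partial>\<pi>)" .
    have pw: "ennreal (f x) + ennreal (w x / 2) \<le> ennreal (h x) + ennreal B" for x
    proof -
      have "f x + w x / 2 \<le> h x + B"
        unfolding f_def w_def h_def using Vnn[of x] B by auto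
      moreover have "f x \<ge> 0" "w x / 2 \<ge> 0" "h x \<ge> 0"
        unfolding f_def w_def h_def using Vnn[of x] B M0 by auto
      ultimately show ?thesis using B
        by (simp only: ennreal_plus[symmetric]) (intro ennreal_leI)
    qed
    have "(\<integral>\<^sup>+x. ennreal (h x) \<partial>\<pi>) + (\<integral>\<^sup>+x. ennreal (w x / 2) \<partial>\<pi>)
        \<le> (\<integral>\<^sup>+x. ennreal (f x) \<partial>\<pi>) + (\<integral>\<^sup>+x. ennreal (w x / 2) \<partial>\<pi>)"
      using hf by (rule add_right_mono)
    also have "\<dots> = (\<integral>\<^sup>+x. ennreal (f x) + ennreal (w x / 2) \<partial>\<pi>)"
      by (rule nn_integral_add[symmetric]) (use pm in auto)
    also have "\<dots> \<le> (\<integral>\<^sup>+x. ennreal (h x) + ennreal B \<partial>\<pi>)"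
      by (rule nn_integral_mono) (rule pw)
    also have "\<dots> = (\<integral>\<^sup>+x. ennreal (h x) \<partial>\<pi>) + ennreal B"
      using pi(1) pm by (subst nn_integral_add) (auto simp: prob_space.emeasure_space_1)
    finally have 3: "(\<integral>\<^sup>+x. ennreal (h x) \<partial>\<pi>) + (\<integral>\<^sup>+x. ennreal (w x / 2) \<partial>\<pi>)
        \<le> (\<integral>\<^sup>+x. ennreal (h x) \<partial>\<pi>) + ennreal B" .
    have "(\<integral>\<^sup>+x. ennreal (h x) \<partial>\<pi>) \<le> (\<integral>\<^sup>+x. ennreal M \<partial>\<pi>)"
      by (rule nn_integral_mono) (auto simp: h_def intro!: ennreal_leI)
    also have "\<dots> = ennreal M" using pi(1) by (simp add: prob_space.emeasure_space_1)
    finally have fin: "(\<integral>\<^sup>+x. ennreal (h x) \<partial>\<pi>) \<noteq> \<infinity>" by (auto simp: top_unique)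
    have "(\<integral>\<^sup>+x. ennreal (w x / 2) \<partial>\<pi>) \<le> ennreal B"
      using 3 fin by (simp add: ennreal_add_left_cancel_le)
    moreover have "(\<integral>\<^sup>+x. ennreal (w x / 2) \<partial>\<pi>) = ennreal (1/2) * (\<integral>\<^sup>+x. ennreal (w x) \<partial>\<pi>)"
    proof -
      have e: "ennreal (w x / 2) = ennreal (1/2) * ennreal (w x)" for x
        using ennreal_mult[of "1/2" "w x"] Vnn[of x] by (simp add: w_def)
      show ?thesis
        by (simp only: e, rule nn_integral_cmult) (rule pm3)
    qed
    ultimately have "ennreal 2 * (ennreal (1/2) * (\<integral>\<^sup>+x. ennreal (w x) \<partial>\<pi>)) \<le> ennreal 2 * ennreal B"
      by (intro mult_left_mono) auto
    also have "ennreal 2 * ennreal B = ennreal (2 * B)" using B by (simp add: ennreal_mult')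
    also have "ennreal 2 * (ennreal (1/2) * (\<integral>\<^sup>+x. ennreal (w x) \<partial>\<pi>)) = (\<integral>\<^sup>+x. ennreal (w x) \<partial>\<pi>)"
    proof -
      have t: "ennreal 2 * ennreal (1/2) = 1" by (subst ennreal_mult'[symmetric]) auto
      show ?thesis unfolding mult.assoc[symmetric] t by simp
    qed
    finally show ?thesis
      unfolding w_def M_def .
  qed
  have "(\<integral>\<^sup>+x. ennreal (V x) \<partial>\<pi>) = (\<integral>\<^sup>+x. (SUP n. ennreal (if V x \<le> real n then V x else 0)) \<partial>\<pi>)"
  proof (rule nn_integral_cong)
    fix x
    obtain N :: nat where N: "V x \<le> real N" using real_arch_simple by blast
    show "ennreal (V x) = (SUP n. ennreal (if V x \<le> real n then V x else 0))"
    proof (rule antisym)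
      show "ennreal (V x) \<le> (SUP n. ennreal (if V x \<le> real n then V x else 0))"
        using N by (intro SUP_upper2[where i=N]) auto
      show "(SUP n. ennreal (if V x \<le> real n then V x else 0)) \<le> ennreal (V x)"
        by (intro SUP_least) auto
    qed
  qed
  also have "\<dots> = (SUP n. (\<integral>\<^sup>+x. ennreal (if V x \<le> real n then V x else 0) \<partial>\<pi>))"
  proof (rule nn_integral_monotone_convergence_SUP)
    show "incseq (\<lambda>n x. ennreal (if V x \<le> real n then V x else 0))"
      by (auto simp: incseq_def le_fun_def intro!: ennreal_leI)
    show "\<And>i. (\<lambda>x. ennreal (if V x \<le> real i then V x else 0)) \<in> borel_measurable \<pi>"
      by (rule mpi[of "\<lambda>x. ennreal (if V x \<le> real i then V x else 0)" for i]) measurable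
  qed
  also have "\<dots> \<le> ennreal (2 * B)"
    by (intro SUP_least trunc)
  finally show ?thesis .
qed



lemma step_sq:
  fixes x a b :: "'a::euclidean_space"
  assumes K1: "K1 > 0" and L: "L > 0" and K2: "K2 \<ge> 0" and eta: "\<eta> > 0" "\<eta> \<le> K1 / (4 * L\<^sup>2)"
    and lip: "norm (a - b) \<le> L * norm x"
    and diss: "x \<bullet> (- a + b) \<le> - K1 * (norm x)\<^sup>2 + K2"
  shows "(norm (x - \<eta> *\<^sub>R a))\<^sup>2 \<le> (1 - \<eta> * K1) * (norm x)\<^sup>2 + 2 * \<eta> * K2 + (2 * \<eta> / K1 + 2 * \<eta>\<^sup>2) * (norm b)\<^sup>2"
proof -
  define X where "X = norm x"
  define Bn where "Bn = norm b"
  have X0: "X \<ge> 0" "Bn \<ge> 0" by (auto simp: X_def Bn_def)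
  have e1: "(norm (x - \<eta> *\<^sub>R a))\<^sup>2 = X\<^sup>2 - 2 * \<eta> * (x \<bullet> a) + \<eta>\<^sup>2 * (norm a)\<^sup>2"
    unfolding X_def power2_norm_eq_inner by (simp add: algebra_simps inner_commute power2_eq_square)
  have e2: "- (x \<bullet> a) \<le> - K1 * X\<^sup>2 + K2 + X * Bn"
  proof -
    have "- (x \<bullet> b) \<le> X * Bn" unfolding X_def Bn_def
      using Cauchy_Schwarz_ineq2[of x b] by (simp add: abs_le_iff)
    moreover have "x \<bullet> (- a + b) = - (x \<bullet> a) + x \<bullet> b" by (simp add: inner_add_right inner_diff_right)
    ultimately show ?thesis using diss unfolding X_def by linarith
  qed
  have na: "norm a \<le> Bn + L * X"
    using norm_triangle_ineq[of "a - b" b] lip unfolding X_def Bn_def by simp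
  have na2: "(norm a)\<^sup>2 \<le> 2 * Bn\<^sup>2 + 2 * L\<^sup>2 * X\<^sup>2"
  proof -
    have "(norm a)\<^sup>2 \<le> (Bn + L * X)\<^sup>2" using na by (simp add: power_mono)
    also have "\<dots> \<le> 2 * Bn\<^sup>2 + 2 * L\<^sup>2 * X\<^sup>2"
    proof -
      have "0 \<le> (Bn - L * X)\<^sup>2" by simp
      thus ?thesis by (simp add: power2_eq_square algebra_simps)
    qed
    finally show ?thesis .
  qed
  have amgm: "2 * X * Bn \<le> (K1 / 2) * X\<^sup>2 + (2 / K1) * Bn\<^sup>2"
  proof -
    have "0 \<le> (K1 / 2) * (X - (2 / K1) * Bn)\<^sup>2" using K1 by simp
    also have "\<dots> = (K1 / 2) * X\<^sup>2 + (2 / K1) * Bn\<^sup>2 - 2 * X * Bn"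
      using K1 by (simp add: power2_eq_square field_simps)
    finally show ?thesis by simp
  qed
  have etaL: "2 * \<eta>\<^sup>2 * L\<^sup>2 \<le> \<eta> * K1 / 2"
  proof -
    have "\<eta> * L\<^sup>2 \<le> K1 / 4" using eta(2) L by (simp add: field_simps)
    hence "\<eta> * (\<eta> * L\<^sup>2) \<le> \<eta> * (K1 / 4)" using eta(1) by (intro mult_left_mono) auto
    thus ?thesis by (simp add: power2_eq_square algebra_simps)
  qed
  have "(norm (x - \<eta> *\<^sub>R a))\<^sup>2 \<le> X\<^sup>2 + 2 * \<eta> * (- K1 * X\<^sup>2 + K2 + X * Bn) + \<eta>\<^sup>2 * (2 * Bn\<^sup>2 + 2 * L\<^sup>2 * X\<^sup>2)"
  proof -
    have A: "2 * \<eta> * (- (x \<bullet> a)) \<le> 2 * \<eta> * (- K1 * X\<^sup>2 + K2 + X * Bn)"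
      by (rule mult_left_mono[OF e2]) (use eta in simp)
    have B: "\<eta>\<^sup>2 * (norm a)\<^sup>2 \<le> \<eta>\<^sup>2 * (2 * Bn\<^sup>2 + 2 * L\<^sup>2 * X\<^sup>2)"
      by (rule mult_left_mono[OF na2]) simp
    show ?thesis unfolding e1 using A B by linarith
  qed
  also have "\<dots> = X\<^sup>2 - 2 * \<eta> * K1 * X\<^sup>2 + 2 * \<eta> * K2 + \<eta> * (2 * X * Bn) + 2 * \<eta>\<^sup>2 * Bn\<^sup>2 + (2 * \<eta>\<^sup>2 * L\<^sup>2) * X\<^sup>2"
    by (simp add: algebra_simps)
  also have "\<dots> \<le> X\<^sup>2 - 2 * \<eta> * K1 * X\<^sup>2 + 2 * \<eta> * K2 + \<eta> * ((K1 / 2) * X\<^sup>2 + (2 / K1) * Bn\<^sup>2) + 2 * \<eta>\<^sup>2 * Bn\<^sup>2 + (\<eta> * K1 / 2) * X\<^sup>2"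
    using amgm etaL eta(1) by (intro add_mono mult_left_mono mult_right_mono) auto
  also have "\<dots> = (1 - \<eta> * K1) * X\<^sup>2 + 2 * \<eta> * K2 + (2 * \<eta> / K1 + 2 * \<eta>\<^sup>2) * Bn\<^sup>2"
    by (simp add: algebra_simps)
  finally show ?thesis unfolding X_def Bn_def .
qed

lemma young_sq:
  fixes y e :: "'a::euclidean_space" assumes "\<epsilon> > 0"
  shows "(norm (y + e))\<^sup>2 \<le> (1 + \<epsilon>) * (norm y)\<^sup>2 + (1 + 1 / \<epsilon>) * (norm e)\<^sup>2"
proof -
  have "2 * (y \<bullet> e) \<le> 2 * (norm y * norm e)" using Cauchy_Schwarz_ineq2[of y e] by simp
  also have "\<dots> \<le> \<epsilon> * (norm y)\<^sup>2 + (1 / \<epsilon>) * (norm e)\<^sup>2"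
  proof -
    have "0 \<le> \<epsilon> * (norm y - (1/\<epsilon>) * norm e)\<^sup>2" using assms by simp
    also have "\<dots> = \<epsilon> * (norm y)\<^sup>2 + (1 / \<epsilon>) * (norm e)\<^sup>2 - 2 * (norm y * norm e)"
      using assms by (simp add: power2_eq_square field_simps)
    finally show ?thesis by simp
  qed
  finally have "2 * (y \<bullet> e) \<le> \<epsilon> * (norm y)\<^sup>2 + (1 / \<epsilon>) * (norm e)\<^sup>2" .
  moreover have "(norm (y + e))\<^sup>2 = (norm y)\<^sup>2 + 2 * (y \<bullet> e) + (norm e)\<^sup>2"
    unfolding power2_norm_eq_inner by (simp add: algebra_simps inner_commute)
  ultimately show ?thesis by (simp add: algebra_simps)
qed



lemma drift:
  fixes g :: "'a::euclidean_space \<Rightarrow> 'c::euclidean_space \<Rightarrow> 'a" and \<nu> :: "'c measure"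
  assumes g_meas: "(\<lambda>p. g (fst p) (snd p)) \<in> borel_measurable borel"
    and nu: "prob_space \<nu>" "sets \<nu> = sets borel"
    and delta: "\<delta> > 0"
    and A1_const: "L > 0" "K1 > 0" "K2 \<ge> 0"
    and A1_lip: "\<And>x y z. norm (g x z - g y z) \<le> L * norm (x - y)"
    and A1_diss: "\<And>x y z. (x - y) \<bullet> (- g x z + g y z) \<le> - K1 * (norm (x - y))\<^sup>2 + K2"
    and K0: "K0 > 0" and A0: "(\<integral>\<^sup>+ z. ennreal (exp (K0 * (norm (g 0 z))\<^sup>2)) \<partial>\<nu>) \<le> ennreal C0"
    and C0: "C0 > 0"
    and eta: "\<eta> > 0" "\<eta> \<le> K1 / (4 * L\<^sup>2)"
    and gam: "\<gamma> > 0" "\<gamma> * (1 + \<eta> * K1 / 2) * (2 * \<eta> / K1 + 2 * \<eta>\<^sup>2) \<le> K0"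
      "\<gamma> * (1 + 1 / (\<eta> * K1 / 2)) * (\<eta> * \<delta>) < 1/2"
  shows "\<exists>D\<ge>0. \<forall>x. (\<integral>\<^sup>+y. ennreal (exp (\<gamma> * (norm y)\<^sup>2)) \<partial>sgld_kernel g \<nu> \<eta> \<delta> x)
            \<le> ennreal (D * exp (\<gamma> * (1 - \<eta> * K1 / 2) * (norm x)\<^sup>2))"
proof -
  define \<epsilon> where "\<epsilon> = \<eta> * K1 / 2"
  define c2 where "c2 = 2 * \<eta> / K1 + 2 * \<eta>\<^sup>2"
  define c where "c = \<gamma> * (1 + 1 / \<epsilon>) * (\<eta> * \<delta>)"
  define G where "G = (2 * pi) powr (- real DIM('a) / 2) * sqrt (pi / (1/2 - c)) ^ DIM('a)"
  define E0 where "E0 = exp (\<gamma> * ((1 + \<epsilon>) * (2 * \<eta> * K2)))"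
  define D where "D = E0 * C0 * G"
  have eps: "\<epsilon> > 0" using eta A1_const by (simp add: \<epsilon>_def)
  have c: "c < 1/2" "c \<ge> 0" using gam(3) eps eta delta gam(1) by (auto simp: c_def \<epsilon>_def)
  have G0: "G \<ge> 0" using c(1) by (auto simp: G_def intro!: mult_nonneg_nonneg)
  have D0: "D \<ge> 0" using C0 G0 by (simp add: D_def E0_def)
  have gm[measurable]: "(\<lambda>(x,z). g x z) \<in> borel_measurable (borel \<Otimes>\<^sub>M borel)"
    using g_meas by (simp add: borel_prod case_prod_beta')
  have S: "sets (\<nu> \<Otimes>\<^sub>M (std_gauss::'a measure)) = sets (borel \<Otimes>\<^sub>M borel)"
    using nu(2) by (intro sets_pair_measure_cong) (auto simp: std_gauss_def)
  have Sn: "sets (std_gauss::'a measure) = sets borel" by (simp add: std_gauss_def)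
  interpret SG: prob_space "std_gauss::'a measure" by (rule std_gauss_prob)
  have BG: "(\<integral>\<^sup>+e. ennreal (exp (c * (norm e)\<^sup>2)) \<partial>(std_gauss::'a measure)) = ennreal G"
    unfolding G_def by (rule std_gauss_moment) (use c in simp)
  have AB: "(\<integral>\<^sup>+z. ennreal (exp (\<gamma> * (1 + \<epsilon>) * c2 * (norm (g 0 z))\<^sup>2)) \<partial>\<nu>) \<le> ennreal C0"
  proof -
    have "(\<integral>\<^sup>+z. ennreal (exp (\<gamma> * (1 + \<epsilon>) * c2 * (norm (g 0 z))\<^sup>2)) \<partial>\<nu>)
       \<le> (\<integral>\<^sup>+ z. ennreal (exp (K0 * (norm (g 0 z))\<^sup>2)) \<partial>\<nu>)"
      using gam(2) by (intro nn_integral_mono ennreal_leI)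
        (auto simp: \<epsilon>_def c2_def intro!: mult_right_mono)
    with A0 show ?thesis by simp
  qed
  show ?thesis
  proof (intro exI[of _ D] conjI allI D0)
    fix x :: 'a
    define F where "F = (\<lambda>(z, e). x - \<eta> *\<^sub>R g x z + sqrt (\<eta> * \<delta>) *\<^sub>R e)"
    have Fm: "F \<in> (\<nu> \<Otimes>\<^sub>M (std_gauss::'a measure)) \<rightarrow>\<^sub>M borel"
      unfolding F_def by (subst measurable_cong_sets[OF S refl]) measurable
    define A where "A z = exp (\<gamma> * (1 - \<eta> * K1 / 2) * (norm x)\<^sup>2) * E0 * exp (\<gamma> * (1 + \<epsilon>) * c2 * (norm (g 0 z))\<^sup>2)" for z
    have Amb[measurable]: "A \<in> borel_measurable borel"
      unfolding A_def by measurable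
    have Am[measurable]: "A \<in> borel_measurable \<nu>"
      by (subst measurable_cong_sets[OF nu(2) refl]) (rule Amb)
    have pt: "exp (\<gamma> * (norm (F (z, e)))\<^sup>2) \<le> A z * exp (c * (norm e)\<^sup>2)" for z e
    proof -
      have s1: "(norm (x - \<eta> *\<^sub>R g x z))\<^sup>2 \<le> (1 - \<eta> * K1) * (norm x)\<^sup>2 + 2 * \<eta> * K2 + c2 * (norm (g 0 z))\<^sup>2"
        unfolding c2_def
        using step_sq[OF A1_const(2) A1_const(1) A1_const(3) eta, of "g x z" "g 0 z" x]
          A1_lip[of x z 0] A1_diss[of x 0 z] by simp
      have s2: "(norm (F (z, e)))\<^sup>2 \<le> (1 + \<epsilon>) * (norm (x - \<eta> *\<^sub>R g x z))\<^sup>2 + (1 + 1 / \<epsilon>) * (norm (sqrt (\<eta> * \<delta>) *\<^sub>R e))\<^sup>2"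
        unfolding F_def using young_sq[OF eps, of "x - \<eta> *\<^sub>R g x z" "sqrt (\<eta> * \<delta>) *\<^sub>R e"] by (simp del: norm_scaleR)
      have s3: "(norm (sqrt (\<eta> * \<delta>) *\<^sub>R e))\<^sup>2 = (\<eta> * \<delta>) * (norm e)\<^sup>2"
        using eta delta by (simp add: power_mult_distrib)
      have s4: "(1 + \<epsilon>) * (1 - \<eta> * K1) \<le> 1 - \<eta> * K1 / 2"
        unfolding \<epsilon>_def using eta A1_const by (simp add: algebra_simps power2_eq_square)
      have "(norm (F (z, e)))\<^sup>2 \<le> (1 + \<epsilon>) * ((1 - \<eta> * K1) * (norm x)\<^sup>2 + 2 * \<eta> * K2 + c2 * (norm (g 0 z))\<^sup>2)
           + (1 + 1 / \<epsilon>) * ((\<eta> * \<delta>) * (norm e)\<^sup>2)"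
      proof -
        have "(1 + \<epsilon>) * (norm (x - \<eta> *\<^sub>R g x z))\<^sup>2 \<le> (1 + \<epsilon>) * ((1 - \<eta> * K1) * (norm x)\<^sup>2 + 2 * \<eta> * K2 + c2 * (norm (g 0 z))\<^sup>2)"
          by (rule mult_left_mono[OF s1]) (use eps in simp)
        thus ?thesis using s2[unfolded s3] by linarith
      qed
      also have "\<dots> \<le> (1 - \<eta> * K1 / 2) * (norm x)\<^sup>2 + (1 + \<epsilon>) * (2 * \<eta> * K2) + (1 + \<epsilon>) * c2 * (norm (g 0 z))\<^sup>2
           + (1 + 1 / \<epsilon>) * ((\<eta> * \<delta>) * (norm e)\<^sup>2)"
        using mult_right_mono[OF s4, of "(norm x)\<^sup>2"] by (simp add: algebra_simps)
      finally have "\<gamma> * (norm (F (z, e)))\<^sup>2 \<le> \<gamma> * ((1 - \<eta> * K1 / 2) * (norm x)\<^sup>2 + (1 + \<epsilon>) * (2 * \<eta> * K2) + (1 + \<epsilon>) * c2 * (norm (g 0 z))\<^sup>2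
           + (1 + 1 / \<epsilon>) * ((\<eta> * \<delta>) * (norm e)\<^sup>2))"
        using gam(1) by (intro mult_left_mono) auto
      also have "\<dots> = \<gamma> * (1 - \<eta> * K1 / 2) * (norm x)\<^sup>2 + \<gamma> * ((1 + \<epsilon>) * (2 * \<eta> * K2))
          + \<gamma> * (1 + \<epsilon>) * c2 * (norm (g 0 z))\<^sup>2 + c * (norm e)\<^sup>2"
        by (simp add: c_def algebra_simps)
      finally have "exp (\<gamma> * (norm (F (z, e)))\<^sup>2) \<le> exp (\<gamma> * (1 - \<eta> * K1 / 2) * (norm x)\<^sup>2 + \<gamma> * ((1 + \<epsilon>) * (2 * \<eta> * K2))
          + \<gamma> * (1 + \<epsilon>) * c2 * (norm (g 0 z))\<^sup>2 + c * (norm e)\<^sup>2)" by simp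
      also have "\<dots> = A z * exp (c * (norm e)\<^sup>2)"
        by (simp add: A_def E0_def exp_add)
      finally show ?thesis .
    qed
    have "(\<integral>\<^sup>+y. ennreal (exp (\<gamma> * (norm y)\<^sup>2)) \<partial>sgld_kernel g \<nu> \<eta> \<delta> x)
        = (\<integral>\<^sup>+p. ennreal (exp (\<gamma> * (norm (F p))\<^sup>2)) \<partial>(\<nu> \<Otimes>\<^sub>M (std_gauss::'a measure)))"
      unfolding sgld_kernel_def F_def[symmetric] by (subst nn_integral_distr[OF Fm]) auto
    also have "\<dots> \<le> (\<integral>\<^sup>+p. ennreal (A (fst p)) * ennreal (exp (c * (norm (snd p))\<^sup>2)) \<partial>(\<nu> \<Otimes>\<^sub>M (std_gauss::'a measure)))"
    proof (rule nn_integral_mono)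
      fix p :: "'c \<times> 'a"
      obtain z e where p: "p = (z, e)" by (cases p)
      have "A z \<ge> 0" by (simp add: A_def E0_def)
      thus "ennreal (exp (\<gamma> * (norm (F p))\<^sup>2)) \<le> ennreal (A (fst p)) * ennreal (exp (c * (norm (snd p))\<^sup>2))"
        using pt[of z e] by (simp add: p ennreal_mult'[symmetric] ennreal_leI)
    qed
    also have "\<dots> = (\<integral>\<^sup>+z. (\<integral>\<^sup>+e. ennreal (A z) * ennreal (exp (c * (norm e)\<^sup>2)) \<partial>(std_gauss::'a measure)) \<partial>\<nu>)"
    proof (subst SG.nn_integral_fst[symmetric])
      show "(\<lambda>p. ennreal (A (fst p)) * ennreal (exp (c * (norm (snd p))\<^sup>2))) \<in> borel_measurable (\<nu> \<Otimes>\<^sub>M (std_gauss::'a measure))"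
        by (subst measurable_cong_sets[OF S refl]) measurable
    qed simp
    also have "\<dots> = (\<integral>\<^sup>+z. ennreal (A z) * ennreal G \<partial>\<nu>)"
      by (subst nn_integral_cmult) (auto simp: BG measurable_cong_sets[OF Sn refl])
    also have "\<dots> = (\<integral>\<^sup>+z. ennreal (exp (\<gamma> * (1 + \<epsilon>) * c2 * (norm (g 0 z))\<^sup>2)) \<partial>\<nu>)
                     * ennreal (exp (\<gamma> * (1 - \<eta> * K1 / 2) * (norm x)\<^sup>2) * E0 * G)"
    proof -
      define A' where "A' z = exp (\<gamma> * (1 + \<epsilon>) * c2 * (norm (g 0 z))\<^sup>2)" for z
      define K where "K = exp (\<gamma> * (1 - \<eta> * K1 / 2) * (norm x)\<^sup>2) * E0 * G"
      have K0': "K \<ge> 0" using G0 by (simp add: K_def E0_def)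
      have A'b: "A' \<in> borel_measurable borel" unfolding A'_def by measurable
      have A'm: "(\<lambda>z. ennreal (A' z)) \<in> borel_measurable \<nu>"
        by (subst measurable_cong_sets[OF nu(2) refl]) (use A'b in measurable)
      have "(\<integral>\<^sup>+z. ennreal (A z) * ennreal G \<partial>\<nu>) = (\<integral>\<^sup>+z. ennreal (A' z) * ennreal K \<partial>\<nu>)"
        using G0 K0' by (intro nn_integral_cong)
          (simp add: A_def A'_def K_def ennreal_mult'[symmetric] E0_def mult_ac)
      also have "\<dots> = (\<integral>\<^sup>+z. ennreal (A' z) \<partial>\<nu>) * ennreal K"
        by (rule nn_integral_multc[OF A'm])
      finally show ?thesis unfolding A'_def K_def .
    qed
    also have "\<dots> \<le> ennreal C0 * ennreal (exp (\<gamma> * (1 - \<eta> * K1 / 2) * (norm x)\<^sup>2) * E0 * G)"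
      by (intro mult_right_mono AB) simp
    also have "\<dots> = ennreal (D * exp (\<gamma> * (1 - \<eta> * K1 / 2) * (norm x)\<^sup>2))"
      using C0 G0 by (simp add: ennreal_mult'[symmetric] D_def mult_ac E0_def)
    finally show "(\<integral>\<^sup>+y. ennreal (exp (\<gamma> * (norm y)\<^sup>2)) \<partial>sgld_kernel g \<nu> \<eta> \<delta> x)
        \<le> ennreal (D * exp (\<gamma> * (1 - \<eta> * K1 / 2) * (norm x)\<^sup>2))" .
  qed
qed



lemma law_const:
  assumes "\<pi> \<bind> sgld_kernel g \<nu> \<eta> \<delta> = \<pi>"
  shows "sgld_law g \<nu> \<eta> \<delta> \<pi> k = \<pi>"
  by (induction k) (simp_all add: assms)

theorem lemma6p1:
  fixes \<psi> :: "'a::euclidean_space \<Rightarrow> 'c::euclidean_space \<Rightarrow> real"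
    and g :: "'a \<Rightarrow> 'c \<Rightarrow> 'a"
    and \<nu> :: "'c measure"
    and L K1 K2 \<delta> :: real
  assumes grad: "\<And>x z. ((\<lambda>y. \<psi> y z) has_derivative (\<lambda>h. g x z \<bullet> h)) (at x)"
    and g_meas: "(\<lambda>p. g (fst p) (snd p)) \<in> borel_measurable borel"
    and nu: "prob_space \<nu>" "sets \<nu> = sets borel"
    and delta: "\<delta> > 0"
    and A1_const: "L > 0" "K1 > 0" "K2 \<ge> 0"
    and A1_lip: "\<And>x y z. norm (g x z - g y z) \<le> L * norm (x - y)"
    and A1_diss: "\<And>x y z. (x - y) \<bullet> (- g x z + g y z) \<le> - K1 * (norm (x - y))\<^sup>2 + K2"
    and A2: "\<And>x. \<exists>K\<zeta> C. K\<zeta> > 0 \<and> C > 0 \<and>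
               (\<integral>\<^sup>+ z. ennreal (exp (K\<zeta> * (norm (g x z))\<^sup>2)) \<partial>\<nu>) \<le> ennreal C"
  shows "\<exists>\<eta>0 > 0. \<forall>\<eta>. 0 < \<eta> \<and> \<eta> < \<eta>0 \<longrightarrow>
           (\<exists>\<gamma>0 > 0. \<forall>\<gamma>. 0 < \<gamma> \<and> \<gamma> < \<gamma>0 \<longrightarrow>
              (\<forall>\<pi>. prob_space \<pi> \<and> sets \<pi> = sets (borel :: 'a measure) \<and>
                    \<pi> \<bind> sgld_kernel g \<nu> \<eta> \<delta> = \<pi> \<longrightarrow>
                 (\<exists>C. \<forall>k. (\<integral>\<^sup>+ x. ennreal (exp (\<gamma> * (norm x)\<^sup>2)) \<partial>(sgld_law g \<nu> \<eta> \<delta> \<pi> k))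
                            \<le> ennreal C)))"
proof -
  obtain K0 C0 where K0: "K0 > 0" and C0: "C0 > 0"
    and A0: "(\<integral>\<^sup>+ z. ennreal (exp (K0 * (norm (g 0 z))\<^sup>2)) \<partial>\<nu>) \<le> ennreal C0"
    using A2[of 0] by blast
  show ?thesis
  proof (rule exI[of _ "K1 / (4 * L\<^sup>2)"], intro conjI allI impI)
    show "K1 / (4 * L\<^sup>2) > 0" using A1_const by simp
    fix \<eta> assume eta: "0 < \<eta> \<and> \<eta> < K1 / (4 * L\<^sup>2)"
    define \<epsilon> where "\<epsilon> = \<eta> * K1 / 2"
    define c2 where "c2 = 2 * \<eta> / K1 + 2 * \<eta>\<^sup>2"
    define q where "q = (1 + 1 / \<epsilon>) * (\<eta> * \<delta>)"
    have eps: "\<epsilon> > 0" using eta A1_const by (simp add: \<epsilon>_def)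
    have c2: "c2 > 0" using eta A1_const by (simp add: c2_def add_pos_pos)
    have q: "q > 0" using eps eta delta by (auto simp: q_def intro!: mult_pos_pos add_pos_pos)
    have oe: "(1 + \<epsilon>) * c2 > 0" using eps c2 by simp
    show "\<exists>\<gamma>0>0. \<forall>\<gamma>. 0 < \<gamma> \<and> \<gamma> < \<gamma>0 \<longrightarrow>
              (\<forall>\<pi>. prob_space \<pi> \<and> sets \<pi> = sets (borel :: 'a measure) \<and>
                    \<pi> \<bind> sgld_kernel g \<nu> \<eta> \<delta> = \<pi> \<longrightarrow>
                 (\<exists>C. \<forall>k. (\<integral>\<^sup>+ x. ennreal (exp (\<gamma> * (norm x)\<^sup>2)) \<partial>(sgld_law g \<nu> \<eta> \<delta> \<pi> k))
                            \<le> ennreal C))"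
    proof (rule exI[of _ "min (K0 / ((1 + \<epsilon>) * c2)) (1 / (4 * q))"], intro conjI allI impI)
      show "min (K0 / ((1 + \<epsilon>) * c2)) (1 / (4 * q)) > 0" using K0 oe q by simp
      fix \<gamma> assume gam: "0 < \<gamma> \<and> \<gamma> < min (K0 / ((1 + \<epsilon>) * c2)) (1 / (4 * q))"
      have g1: "\<gamma> * (1 + \<eta> * K1 / 2) * (2 * \<eta> / K1 + 2 * \<eta>\<^sup>2) \<le> K0"
      proof -
        have "\<gamma> * ((1 + \<epsilon>) * c2) \<le> K0"
          using gam oe by (simp add: pos_less_divide_eq less_imp_le)
        thus ?thesis by (simp add: \<epsilon>_def c2_def mult.assoc)
      qed
      have g2: "\<gamma> * (1 + 1 / (\<eta> * K1 / 2)) * (\<eta> * \<delta>) < 1/2"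
      proof -
        have "\<gamma> * (4 * q) < 1" using gam q by (simp add: pos_less_divide_eq)
        hence "\<gamma> * q < 1/2" by simp
        thus ?thesis by (simp add: q_def \<epsilon>_def mult.assoc)
      qed
      obtain D where D0: "D \<ge> 0" and Dd: "\<And>x. (\<integral>\<^sup>+y. ennreal (exp (\<gamma> * (norm y)\<^sup>2)) \<partial>sgld_kernel g \<nu> \<eta> \<delta> x)
            \<le> ennreal (D * exp (\<gamma> * (1 - \<eta> * K1 / 2) * (norm x)\<^sup>2))"
        using drift[OF g_meas nu delta A1_const A1_lip A1_diss K0 A0 C0 _ _ _ g1 g2] eta gam
        by auto
      define \<rho> where "\<rho> = 1 - \<eta> * K1 / 2"
      define R where "R = ln (2 * D + 1) / (\<gamma> * \<epsilon>)"
      define B where "B = D * exp (\<gamma> * \<bar>\<rho>\<bar> * R)"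
      have ge: "\<gamma> * \<epsilon> > 0" using gam eps by simp
      have R0: "R \<ge> 0" using ge D0 by (simp add: R_def)
      have B0: "B \<ge> 0" using D0 by (simp add: B_def)
      have eR: "exp (- (\<gamma> * \<epsilon>) * R) = 1 / (2 * D + 1)"
      proof -
        have "(\<gamma> * \<epsilon>) * R = ln (2 * D + 1)" using ge gam eps unfolding R_def by simp
        hence "- (\<gamma> * \<epsilon>) * R = - ln (2 * D + 1)" by simp
        thus ?thesis using D0 by (simp add: exp_minus inverse_eq_divide)
      qed
      have key: "D * exp (\<gamma> * \<rho> * (norm x)\<^sup>2) \<le> exp (\<gamma> * (norm x)\<^sup>2) / 2 + B" for x :: 'a
      proof (cases "(norm x)\<^sup>2 \<le> R")
        case True
        have "\<gamma> * \<rho> * (norm x)\<^sup>2 \<le> \<gamma> * \<bar>\<rho>\<bar> * R"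
        proof -
          have "\<rho> * (norm x)\<^sup>2 \<le> \<bar>\<rho>\<bar> * R"
          proof -
            have "\<rho> * (norm x)\<^sup>2 \<le> \<bar>\<rho>\<bar> * (norm x)\<^sup>2" by (rule mult_right_mono) auto
            also have "\<dots> \<le> \<bar>\<rho>\<bar> * R" by (rule mult_left_mono) (use True in auto)
            finally show ?thesis .
          qed
          thus ?thesis using gam by (simp add: mult.assoc mult_left_mono)
        qed
        hence "D * exp (\<gamma> * \<rho> * (norm x)\<^sup>2) \<le> B"
          unfolding B_def using D0 by (intro mult_left_mono) auto
        thus ?thesis using exp_gt_zero[of "\<gamma> * (norm x)\<^sup>2"] by linarith
      next
        case False
        have "\<gamma> * \<rho> * (norm x)\<^sup>2 = \<gamma> * (norm x)\<^sup>2 + (- (\<gamma> * \<epsilon>)) * (norm x)\<^sup>2"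
          by (simp add: \<rho>_def \<epsilon>_def algebra_simps)
        hence "exp (\<gamma> * \<rho> * (norm x)\<^sup>2) = exp (\<gamma> * (norm x)\<^sup>2) * exp (- (\<gamma> * \<epsilon>) * (norm x)\<^sup>2)"
          by (simp only: exp_add[symmetric])
        also have "\<dots> \<le> exp (\<gamma> * (norm x)\<^sup>2) * exp (- (\<gamma> * \<epsilon>) * R)"
          using False ge by (intro mult_left_mono) (auto intro!: mult_left_mono)
        finally have "D * exp (\<gamma> * \<rho> * (norm x)\<^sup>2) \<le> D * (exp (\<gamma> * (norm x)\<^sup>2) * (1 / (2 * D + 1)))"
          using D0 eR by (intro mult_left_mono) auto
        also have "\<dots> = exp (\<gamma> * (norm x)\<^sup>2) * (D / (2 * D + 1))" by simp
        also have "\<dots> \<le> exp (\<gamma> * (norm x)\<^sup>2) * (1 / 2)"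
          using D0 by (intro mult_left_mono) (auto simp: divide_simps)
        finally show ?thesis using B0 by simp
      qed
      fix \<pi> :: "'a measure"
      assume pi: "prob_space \<pi> \<and> sets \<pi> = sets (borel :: 'a measure) \<and> \<pi> \<bind> sgld_kernel g \<nu> \<eta> \<delta> = \<pi>"
      have bound: "(\<integral>\<^sup>+x. ennreal (exp (\<gamma> * (norm x)\<^sup>2)) \<partial>\<pi>) \<le> ennreal (2 * B)"
      proof (rule stationary_bound[where P = "sgld_kernel g \<nu> \<eta> \<delta>"])
        show "prob_space \<pi>" "sets \<pi> = sets borel" "\<pi> \<bind> sgld_kernel g \<nu> \<eta> \<delta> = \<pi>" using pi by auto
        show "sgld_kernel g \<nu> \<eta> \<delta> \<in> borel \<rightarrow>\<^sub>M subprob_algebra borel"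
          "\<And>x. prob_space (sgld_kernel g \<nu> \<eta> \<delta> x)"
          using kernel_props[OF g_meas nu] by auto
        show "(\<lambda>x. exp (\<gamma> * (norm x)\<^sup>2)) \<in> borel_measurable borel" by measurable
        show "\<And>x. exp (\<gamma> * (norm x)\<^sup>2) \<ge> 0" by simp
        show "B \<ge> 0" by (rule B0)
        fix x :: 'a
        show "(\<integral>\<^sup>+y. ennreal (exp (\<gamma> * (norm y)\<^sup>2)) \<partial>sgld_kernel g \<nu> \<eta> \<delta> x)
            \<le> ennreal (exp (\<gamma> * (norm x)\<^sup>2) / 2 + B)"
          by (rule order.trans[OF Dd[of x]], rule ennreal_leI) (use key[of x] in \<open>simp add: \<rho>_def\<close>)
      qed
      show "\<exists>C. \<forall>k. (\<integral>\<^sup>+ x. ennreal (exp (\<gamma> * (norm x)\<^sup>2)) \<partial>(sgld_law g \<nu> \<eta> \<delta> \<pi> k)) \<le> ennreal C"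
        using bound law_const[of \<pi> g \<nu> \<eta> \<delta>] pi by auto
    qed
  qed
qed

end
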